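(* Let $S$ be a finite (possibly empty) set of rational primes. Then the action of $\Gamma_S$ on $\mathfrak{X}_S$ is vertex transitive: for every vertex $v$ of $\mathfrak{X}_S$ there is $\gamma\in\Gamma_S$ with $\gamma\, v_0 = v$. Consequently the action of $\overline{\Gamma}_S$ on $\mathfrak{X}_S$ is vertex transitive as well.
   Context: Let $\mathcal{H}$ be the quaternion algebra over $\mathbb{Q}$ with basis $1, I, J, IJ$ and relations $I^2=J^2=-1$, $IJ=-JI$, with reduced norm $\mathrm{Nm}(a+bI+cJ+dIJ)=a^2+b^2+c^2+d^2$. Let $\mathcal{O}$ be the Hurwitz order, the $\mathbb{Z}$-span of $1, I, J, \tfrac12(1+I+J+IJ)$. For a finite set $S$ of primes, let $\mathbb{Z}_S=\mathbb{Z}[1/p : p\in S]$, $m_S=\prod_{p\in S}p$, $\mathcal{O}_S=\mathcal{O}\otimes_{\mathbb{Z}}\mathbb{Z}_S$, $\Gamma_S=\mathcal{O}_S^*$ (the $S$-unit group), and $\overline{\Gamma}_S=\Gamma_S/\mathbb{Z}_S^*$ (units modulo central scalars). For each odd prime $p$ fix an isomorphism $\mathcal{H}\otimes_{\mathbb{Q}}\mathbb{Q}_p\cong \mathrm{M}_2(\mathbb{Q}_p)$ carrying $\mathcal{O}\otimes_{\mathbb{Z}}\mathbb{Z}_p$ onto $\mathrm{M}_2(\mathbb{Z}_p)$; let $\mathfrak{X}_p$ be the Bruhat–Tits tree of $\mathrm{PGL}_2(\mathbb{Q}_p)$ (vertices are homothety classes of $\mathbb{Z}_p$-lattices in $\mathbb{Q}_p^2$,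 two classes adjacent when representatives $L'\subset L$ satisfy $L/L'\cong \mathbb{Z}/p$), on which $\Gamma_S$ acts through $\mathcal{H}^*\subset \mathrm{GL}_2(\mathbb{Q}_p)$, and let $v_{0,p}$ be the class of $\mathbb{Z}_p\oplus\mathbb{Z}_p$. For $p=2$, let $\mathfrak{X}_2$ be a single point $v_{0,2}$ with trivial action. Put $\mathfrak{X}_S=\prod_{p\in S}\mathfrak{X}_p$ with the diagonal action of $\Gamma_S$ (scalars act trivially, so $\overline{\Gamma}_S$ acts); a vertex of $\mathfrak{X}_S$ is a tuple of vertices of the factors, and $v_0=(v_{0,p})_{p\in S}$. *)

theory Defs
  imports Complex_Main "HOL-Computational_Algebra.Primes"
begin

datatype quat = Quat rat rat rat rat  \<comment> \<open>Quat a b c d = a + bI + cJ + d IJ\<close>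

definition qone :: quat where "qone = Quat 1 0 0 0"

fun qadd :: "quat \<Rightarrow> quat \<Rightarrow> quat" where
  "qadd (Quat a1 b1 c1 d1) (Quat a2 b2 c2 d2) = Quat (a1+a2) (b1+b2) (c1+c2) (d1+d2)"

fun qsmult :: "rat \<Rightarrow> quat \<Rightarrow> quat" where
  "qsmult r (Quat a b c d) = Quat (r*a) (r*b) (r*c) (r*d)"

text \<open>Multiplication with I^2 = J^2 = -1, IJ = -JI.\<close>
fun qmul :: "quat \<Rightarrow> quat \<Rightarrow> quat" where
  "qmul (Quat a1 b1 c1 d1) (Quat a2 b2 c2 d2) =
     Quat (a1*a2 - b1*b2 - c1*c2 - d1*d2)
          (a1*b2 + b1*a2 + c1*d2 - d1*c2)
          (a1*c2 - b1*d2 + c1*a2 + d1*b2)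
          (a1*d2 + b1*c2 - c1*b2 + d1*a2)"

fun qnorm :: "quat \<Rightarrow> rat" where
  "qnorm (Quat a b c d) = a^2 + b^2 + c^2 + d^2"

text \<open>The Hurwitz order: Z-span of 1, I, J, (1+I+J+IJ)/2.\<close>
definition hurwitz :: "quat set" where
  "hurwitz = {Quat (of_int x + of_int w / 2) (of_int y + of_int w / 2)
                   (of_int z + of_int w / 2) (of_int w / 2) | x y z w :: int. True}"

definition hurwitz_basis :: "nat \<Rightarrow> quat" where
  "hurwitz_basis i = (if i = 0 then Quat 1 0 0 0 else if i = 1 then Quat 0 1 0 0
                      else if i = 2 then Quat 0 0 1 0 else Quat (1/2) (1/2) (1/2) (1/2))"

definition mS :: "nat set \<Rightarrow> nat" where "mS S = (\<Prod>p\<in>S. p)"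

definition ZS :: "nat set \<Rightarrow> rat set" where
  "ZS S = {of_int a / of_nat (mS S ^ k) | a k. True}"

definition ZS_units :: "nat set \<Rightarrow> rat set" where
  "ZS_units S = {c \<in> ZS S. c \<noteq> 0 \<and> inverse c \<in> ZS S}"

text \<open>O_S = O \<otimes> Z_S, realised inside H as the Z_S-span of O.\<close>
definition OS :: "nat set \<Rightarrow> quat set" where
  "OS S = {qsmult (1 / of_nat (mS S ^ k)) q | q k. q \<in> hurwitz}"

definition GammaS :: "nat set \<Rightarrow> quat set" where
  "GammaS S = {g \<in> OS S. \<exists>h \<in> OS S. qmul g h = qone \<and> qmul h g = qone}"

text \<open>Gamma_S modulo central scalars Z_S^*: its elements are the cosets.\<close>
definition GammaBarS :: "nat set \<Rightarrow> quat set set" where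
  "GammaBarS S = (\<lambda>g. (\<lambda>c. qsmult c g) ` ZS_units S) ` GammaS S"

section \<open>p-adic integers as the inverse limit of Z/p^n\<close>

type_synonym zp_elt = "nat \<Rightarrow> int"

definition zp :: "int \<Rightarrow> zp_elt set" where
  "zp p = {f. (\<forall>n. 0 \<le> f n \<and> f n < p ^ n) \<and> (\<forall>n. f (Suc n) mod p ^ n = f n)}"

definition zp_of_int :: "int \<Rightarrow> int \<Rightarrow> zp_elt" where
  "zp_of_int p k = (\<lambda>n. k mod p ^ n)"

definition zp_add :: "int \<Rightarrow> zp_elt \<Rightarrow> zp_elt \<Rightarrow> zp_elt" where
  "zp_add p a b = (\<lambda>n. (a n + b n) mod p ^ n)"

definition zp_mul :: "int \<Rightarrow> zp_elt \<Rightarrow> zp_elt \<Rightarrow> zp_elt" where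
  "zp_mul p a b = (\<lambda>n. (a n * b n) mod p ^ n)"

datatype m2 = M2 zp_elt zp_elt zp_elt zp_elt  \<comment> \<open>M2 a b c d = [[a,b],[c,d]]\<close>

definition m2_carrier :: "int \<Rightarrow> m2 set" where
  "m2_carrier p = {M2 a b c d | a b c d. a \<in> zp p \<and> b \<in> zp p \<and> c \<in> zp p \<and> d \<in> zp p}"

fun m2_add :: "int \<Rightarrow> m2 \<Rightarrow> m2 \<Rightarrow> m2" where
  "m2_add p (M2 a b c d) (M2 a' b' c' d') =
     M2 (zp_add p a a') (zp_add p b b') (zp_add p c c') (zp_add p d d')"

fun m2_mul :: "int \<Rightarrow> m2 \<Rightarrow> m2 \<Rightarrow> m2" where
  "m2_mul p (M2 a b c d) (M2 a' b' c' d') =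
     M2 (zp_add p (zp_mul p a a') (zp_mul p b c')) (zp_add p (zp_mul p a b') (zp_mul p b d'))
        (zp_add p (zp_mul p c a') (zp_mul p d c')) (zp_add p (zp_mul p c b') (zp_mul p d d'))"

fun m2_smult :: "int \<Rightarrow> zp_elt \<Rightarrow> m2 \<Rightarrow> m2" where
  "m2_smult p s (M2 a b c d) = M2 (zp_mul p s a) (zp_mul p s b) (zp_mul p s c) (zp_mul p s d)"

definition m2_one :: "int \<Rightarrow> m2" where
  "m2_one p = M2 (zp_of_int p 1) (zp_of_int p 0) (zp_of_int p 0) (zp_of_int p 1)"

fun m2_vec :: "int \<Rightarrow> m2 \<Rightarrow> zp_elt \<times> zp_elt \<Rightarrow> zp_elt \<times> zp_elt" where
  "m2_vec p (M2 a b c d) (x, y) = (zp_add p (zp_mul p a x) (zp_mul p b y),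
                                  zp_add p (zp_mul p c x) (zp_mul p d y))"

text \<open>A map psi : O \<rightarrow> M_2(Z_p) whose Z_p-linear extension is an isomorphism of
  rings O \<otimes> Z_p \<cong> M_2(Z_p): psi is additive, multiplicative and unital on O, and
  the images of the Z-basis of O form a Z_p-basis of M_2(Z_p).\<close>
definition hurwitz_iso :: "int \<Rightarrow> (quat \<Rightarrow> m2) \<Rightarrow> bool" where
  "hurwitz_iso p \<psi> \<longleftrightarrow>
     (\<forall>x\<in>hurwitz. \<psi> x \<in> m2_carrier p) \<and>
     (\<forall>x\<in>hurwitz. \<forall>y\<in>hurwitz. \<psi> (qadd x y) = m2_add p (\<psi> x) (\<psi> y)) \<and>
     (\<forall>x\<in>hurwitz. \<forall>y\<in>hurwitz. \<psi> (qmul x y) = m2_mul p (\<psi> x) (\<psi> y)) \<and>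
     \<psi> qone = m2_one p \<and>
     (\<forall>M\<in>m2_carrier p. \<exists>!c :: nat \<Rightarrow> zp_elt. (\<forall>i<4. c i \<in> zp p) \<and> (\<forall>i\<ge>4. c i = (\<lambda>_. 0)) \<and>
        M = m2_add p (m2_add p (m2_smult p (c 0) (\<psi> (hurwitz_basis 0)))
                                (m2_smult p (c 1) (\<psi> (hurwitz_basis 1))))
                     (m2_add p (m2_smult p (c 2) (\<psi> (hurwitz_basis 2)))
                                (m2_smult p (c 3) (\<psi> (hurwitz_basis 3)))))"

text \<open>Z_p-lattices contained in Z_p^2 (every homothety class of lattices in Q_p^2
  has such a representative).  A lattice in Z_p^2 is a Z_p-submodule containing p^n Z_p^2.\<close>
definition zp_lattice :: "int \<Rightarrow> (zp_elt \<times> zp_elt) set \<Rightarrow> bool" where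
  "zp_lattice p L \<longleftrightarrow> L \<subseteq> zp p \<times> zp p \<and> (zp_of_int p 0, zp_of_int p 0) \<in> L \<and>
     (\<forall>u\<in>L. \<forall>v\<in>L. (zp_add p (fst u) (fst v), zp_add p (snd u) (snd v)) \<in> L) \<and>
     (\<forall>s\<in>zp p. \<forall>u\<in>L. (zp_mul p s (fst u), zp_mul p s (snd u)) \<in> L) \<and>
     (\<exists>n. \<forall>x\<in>zp p. \<forall>y\<in>zp p.
         (zp_mul p (zp_of_int p (p ^ n)) x, zp_mul p (zp_of_int p (p ^ n)) y) \<in> L)"

definition zp_scale :: "int \<Rightarrow> nat \<Rightarrow> (zp_elt \<times> zp_elt) set \<Rightarrow> (zp_elt \<times> zp_elt) set" where
  "zp_scale p a L = (\<lambda>u. (zp_mul p (zp_of_int p (p ^ a)) (fst u),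
                          zp_mul p (zp_of_int p (p ^ a)) (snd u))) ` L"

text \<open>Homothety of lattices (contained in Z_p^2); scaling by p-adic units fixes
  lattices, so homothety reduces to p-power scalings.\<close>
definition homothetic :: "int \<Rightarrow> (zp_elt \<times> zp_elt) set \<Rightarrow> (zp_elt \<times> zp_elt) set \<Rightarrow> bool" where
  "homothetic p L L' \<longleftrightarrow> (\<exists>a b. zp_scale p a L = zp_scale p b L')"

definition zp_std :: "int \<Rightarrow> (zp_elt \<times> zp_elt) set" where
  "zp_std p = zp p \<times> zp p"

text \<open>gamma in Gamma_S sends the vertex [L] to the vertex [L'] in the tree at p:
  gamma acts via the Q_p-linear extension of psi; since m_S^k gamma lies in O for
  some k and central scalars act trivially, this is the class of psi(m_S^k gamma) L.\<close>
definition maps_vertex :: "nat set \<Rightarrow> nat \<Rightarrow> (quat \<Rightarrow> m2) \<Rightarrow> quat \<Rightarrow>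
    (zp_elt \<times> zp_elt) set \<Rightarrow> (zp_elt \<times> zp_elt) set \<Rightarrow> bool" where
  "maps_vertex S p \<psi> g L L' \<longleftrightarrow>
     (\<exists>k. qsmult (of_nat (mS S ^ k)) g \<in> hurwitz \<and>
          homothetic (int p) (m2_vec (int p) (\<psi> (qsmult (of_nat (mS S ^ k)) g)) ` L) L')"

end

theory Submission
  imports Defs
begin


lemma zp_mem: "f \<in> zp p \<Longrightarrow> 0 \<le> f n \<and> f n < p ^ n"
  by (simp add: zp_def)

lemma zp_canon: assumes "f \<in> zp p" shows "f (n + k) mod p ^ n = f n"
proof (induction k)
  case 0
  then show ?case using zp_mem[OF assms, of n] by simp
next
  case (Suc k)
  have "f (Suc (n + k)) mod p ^ (n + k) = f (n+k)" using assms by (simp add: zp_def)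
  moreover have "p ^ n dvd p ^ (n + k)" by (simp add: power_add)
  ultimately have "f (Suc (n + k)) mod p ^ n = f (n+k) mod p ^ n"
    by (metis mod_mod_cancel)
  then show ?case using Suc by simp
qed

lemma zp_self_mod: "f \<in> zp p \<Longrightarrow> f n mod p ^ n = f n"
  using zp_mem[of f p n] by (intro mod_pos_pos_trivial) auto

lemma zp_eqI:
  assumes "f \<in> zp p" "g \<in> zp p" "\<And>n. f n mod p ^ n = g n mod p ^ n"
  shows "f = g"
proof (rule ext)
  fix n
  have "f n = f n mod p ^ n" using zp_self_mod[OF assms(1)] by metis
  also have "\<dots> = g n mod p ^ n" by (rule assms(3))
  also have "\<dots> = g n" by (rule zp_self_mod[OF assms(2)])
  finally show "f n = g n" .
qed

lemma zp_modI:
  assumes "p > 1" "\<And>n. f (Suc n) mod p ^ n = f n mod p ^ n" "\<And>n. f n mod p ^ n = f n"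
  shows "f \<in> zp p"
  unfolding zp_def
proof (intro CollectI conjI allI)
  fix n
  have e: "f n mod p ^ n = f n" by (rule assms(3))
  have pp: "p ^ n > 0" using assms(1) by simp
  have "0 \<le> f n mod p ^ n" using pp by (rule pos_mod_sign)
  then show "0 \<le> f n" unfolding e .
  have "f n mod p ^ n < p ^ n" using pp by (rule pos_mod_bound)
  then show "f n < p ^ n" unfolding e .
  show "f (Suc n) mod p ^ n = f n" using assms(2)[of n] unfolding e .
qed

lemmas modsimps = mod_add_left_eq mod_add_right_eq mod_mult_left_eq mod_mult_right_eq
  mod_diff_left_eq mod_diff_right_eq

lemma mod_pow_Suc: "(x::int) mod p ^ Suc n mod p ^ n = x mod p ^ n"
  by (rule mod_mod_cancel) simp

lemma zp_Suc: "f \<in> zp p \<Longrightarrow> f (Suc n) mod p ^ n = f n"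
  using zp_canon[of f p n 1] by simp

lemma zp_add_mem: assumes "p > 1" "a \<in> zp p" "b \<in> zp p" shows "zp_add p a b \<in> zp p"
proof (rule zp_modI[OF assms(1)])
  fix n
  have "(a (Suc n) + b (Suc n)) mod p ^ n = (a (Suc n) mod p ^ n + b (Suc n) mod p ^ n) mod p ^ n"
    by (rule mod_add_eq[symmetric])
  also have "\<dots> = (a n + b n) mod p ^ n" unfolding zp_Suc[OF assms(2)] zp_Suc[OF assms(3)] ..
  finally show "zp_add p a b (Suc n) mod p ^ n = zp_add p a b n mod p ^ n"
    unfolding zp_add_def mod_pow_Suc mod_mod_trivial .
qed (simp add: zp_add_def)

lemma zp_mul_mem: assumes "p > 1" "a \<in> zp p" "b \<in> zp p" shows "zp_mul p a b \<in> zp p"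
proof (rule zp_modI[OF assms(1)])
  fix n
  have "(a (Suc n) * b (Suc n)) mod p ^ n = (a (Suc n) mod p ^ n * (b (Suc n) mod p ^ n)) mod p ^ n"
    by (rule mod_mult_eq[symmetric])
  also have "\<dots> = (a n * b n) mod p ^ n" unfolding zp_Suc[OF assms(2)] zp_Suc[OF assms(3)] ..
  finally show "zp_mul p a b (Suc n) mod p ^ n = zp_mul p a b n mod p ^ n"
    unfolding zp_mul_def mod_pow_Suc mod_mod_trivial .
qed (simp add: zp_mul_def)

lemma zp_of_int_mem: assumes "p > 1" shows "zp_of_int p k \<in> zp p"
proof (rule zp_modI[OF assms(1)])
  fix n show "zp_of_int p k (Suc n) mod p ^ n = zp_of_int p k n mod p ^ n"
    unfolding zp_of_int_def mod_pow_Suc by simp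
qed (simp add: zp_of_int_def)

lemma zp_mul_assoc: "zp_mul p a (zp_mul p b c) = zp_mul p (zp_mul p a b) c"
  by (rule ext) (simp add: zp_mul_def modsimps mult.assoc)


definition vadd :: "int \<Rightarrow> zp_elt \<times> zp_elt \<Rightarrow> zp_elt \<times> zp_elt \<Rightarrow> zp_elt \<times> zp_elt" where
  "vadd p u w = (zp_add p (fst u) (fst w), zp_add p (snd u) (snd w))"
definition vsc :: "int \<Rightarrow> zp_elt \<Rightarrow> zp_elt \<times> zp_elt \<Rightarrow> zp_elt \<times> zp_elt" where
  "vsc p s u = (zp_mul p s (fst u), zp_mul p s (snd u))"

lemma m2_vec_vadd: "m2_vec p A (vadd p u w) = vadd p (m2_vec p A u) (m2_vec p A w)"
  by (cases A; cases u; cases w) (simp add: vadd_def zp_add_def zp_mul_def modsimps, simp add: algebra_simps)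

lemma m2_vec_vsc: "m2_vec p A (vsc p s u) = vsc p s (m2_vec p A u)"
  by (cases A; cases u) (simp add: vsc_def zp_add_def zp_mul_def modsimps, simp add: algebra_simps)

lemma m2_vec_add: "m2_vec p (m2_add p A B) u = vadd p (m2_vec p A u) (m2_vec p B u)"
  by (cases A; cases B; cases u) (simp add: vadd_def zp_add_def zp_mul_def modsimps, simp add: algebra_simps)

lemma m2_vec_mul: "m2_vec p (m2_mul p A B) u = m2_vec p A (m2_vec p B u)"
  by (cases A; cases B; cases u) (simp add: zp_add_def zp_mul_def modsimps, simp add: algebra_simps)

lemma m2_vec_smult: "m2_vec p (m2_smult p s A) u = vsc p s (m2_vec p A u)"
  by (cases A; cases u) (simp add: vsc_def zp_add_def zp_mul_def modsimps, simp add: algebra_simps)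


definition qzero :: quat where "qzero = Quat 0 0 0 0"
fun qconj :: "quat \<Rightarrow> quat" where "qconj (Quat a b c d) = Quat a (-b) (-c) (-d)"
definition qsub :: "quat \<Rightarrow> quat \<Rightarrow> quat" where "qsub x y = qadd x (qsmult (-1) y)"

lemma qmul_assoc: "qmul (qmul x y) z = qmul x (qmul y z)"
  by (cases x; cases y; cases z) (simp add: algebra_simps)

lemma qmul_qadd_right: "qmul x (qadd y z) = qadd (qmul x y) (qmul x z)"
  by (cases x; cases y; cases z) (simp add: algebra_simps)

lemma qmul_qsub_right: "qmul x (qsub y z) = qsub (qmul x y) (qmul x z)"
  by (cases x; cases y; cases z) (simp add: qsub_def algebra_simps)

lemma qmul_smult_right: "qmul x (qsmult r y) = qsmult r (qmul x y)"
  by (cases x; cases y) (simp add: algebra_simps)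

lemma qmul_smult_left: "qmul (qsmult r x) y = qsmult r (qmul x y)"
  by (cases x; cases y) (simp add: algebra_simps)

lemma qmul_conj: "qmul x (qconj x) = qsmult (qnorm x) qone"
  by (cases x) (simp add: qone_def algebra_simps power2_eq_square)

lemma qmul_conj': "qmul (qconj x) x = qsmult (qnorm x) qone"
  by (cases x) (simp add: qone_def algebra_simps power2_eq_square)

lemma qmul_one[simp]: "qmul x qone = x" "qmul qone x = x"
  by (cases x; simp add: qone_def)+

lemma qsmult_smult: "qsmult r (qsmult s x) = qsmult (r * s) x"
  by (cases x) (simp add: algebra_simps)

lemma qsmult_one[simp]: "qsmult 1 x = x"
  by (cases x) simp

lemma qnorm_mul: "qnorm (qmul x y) = qnorm x * qnorm y"
  by (cases x; cases y) (simp add: algebra_simps power2_eq_square)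

lemma qnorm_nonneg: "qnorm x \<ge> 0"
  by (cases x) simp

lemma qnorm_zero_iff: "qnorm x = 0 \<longleftrightarrow> x = qzero"
  by (cases x) (simp add: qzero_def add_nonneg_eq_0_iff)

lemma qsub_self: "qsub x x = qzero"
  by (cases x) (simp add: qsub_def qzero_def)

lemma qsub_eq0: "qsub x y = qzero \<Longrightarrow> x = y"
  by (cases x; cases y) (simp add: qsub_def qzero_def)

lemma qadd_qsub: "qsub (qadd x y) y = x"
  by (cases x; cases y) (simp add: qsub_def)


lemma hurwitzI:
  assumes "a = of_int x + of_int w / 2" "b = of_int y + of_int w / 2"
          "c = of_int z + of_int w / 2" "d = of_int w / 2"
  shows "Quat a b c d \<in> hurwitz"
  unfolding hurwitz_def using assms by blast

lemma hurwitzE: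
  assumes "q \<in> hurwitz"
  obtains x y z w where "q = Quat (of_int x + of_int w / 2) (of_int y + of_int w / 2)
                   (of_int z + of_int w / 2) (of_int w / 2)"
  using assms unfolding hurwitz_def by blast

lemma hurwitz_add: assumes "q1 \<in> hurwitz" "q2 \<in> hurwitz" shows "qadd q1 q2 \<in> hurwitz"
proof -
  obtain x y z w where 1: "q1 = Quat (of_int x + of_int w / 2) (of_int y + of_int w / 2)
                   (of_int z + of_int w / 2) (of_int w / 2)" using assms(1) by (rule hurwitzE)
  obtain u v s t where 2: "q2 = Quat (of_int u + of_int t / 2) (of_int v + of_int t / 2)
                   (of_int s + of_int t / 2) (of_int t / 2)" using assms(2) by (rule hurwitzE)
  show ?thesis unfolding 1 2
    by (simp, rule hurwitzI[of _ "x+u" "w+t" _ "y+v" _ "z+s"]) (simp_all add: field_simps)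
qed

lemma hurwitz_mul: assumes "q1 \<in> hurwitz" "q2 \<in> hurwitz" shows "qmul q1 q2 \<in> hurwitz"
proof -
  obtain x y z w where 1: "q1 = Quat (of_int x + of_int w / 2) (of_int y + of_int w / 2)
                   (of_int z + of_int w / 2) (of_int w / 2)" using assms(1) by (rule hurwitzE)
  obtain u v s t where 2: "q2 = Quat (of_int u + of_int t / 2) (of_int v + of_int t / 2)
                   (of_int s + of_int t / 2) (of_int t / 2)" using assms(2) by (rule hurwitzE)
  show ?thesis unfolding 1 2
    by (simp only: qmul.simps, rule hurwitzI[of _ "- s*w - s*y - s*z - t*w - t*y + u*x - v*y + v*z"
          "s*w + 2*s*y + t*w + t*x + t*y - t*z + u*w - v*w - 2*v*z"
          _ "- s*w - s*y + t*z + u*y + v*w + v*x + v*z"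
          _ "s*x - s*y - t*y + t*z + u*z + v*w + v*z"]) (simp_all add: field_simps)
qed

lemma hurwitz_smult: assumes "q \<in> hurwitz" shows "qsmult (of_int k) q \<in> hurwitz"
proof -
  obtain x y z w where 1: "q = Quat (of_int x + of_int w / 2) (of_int y + of_int w / 2)
                   (of_int z + of_int w / 2) (of_int w / 2)" using assms(1) by (rule hurwitzE)
  show ?thesis unfolding 1
    by (simp only: qsmult.simps, rule hurwitzI[of _ "k*x" "k*w" _ "k*y" _ "k*z"]) (simp_all add: field_simps)
qed

lemma hurwitz_sub: "x \<in> hurwitz \<Longrightarrow> y \<in> hurwitz \<Longrightarrow> qsub x y \<in> hurwitz"
  unfolding qsub_def using hurwitz_add hurwitz_smult[of y "-1"] by simp

lemma hurwitz_one: "qone \<in> hurwitz"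
  unfolding qone_def by (rule hurwitzI[of _ 1 0 _ 0 _ 0]) simp_all

lemma hurwitz_zero: "qzero \<in> hurwitz"
  unfolding qzero_def by (rule hurwitzI[of _ 0 0 _ 0 _ 0]) simp_all

lemma hurwitz_basis_mem: "hurwitz_basis i \<in> hurwitz"
  unfolding hurwitz_basis_def
  by (auto intro: hurwitzI[of _ 1 0 _ 0 _ 0] hurwitzI[of _ 0 0 _ 1 _ 0]
      hurwitzI[of _ 0 0 _ 0 _ 1] hurwitzI[of _ 0 1 _ 0 _ 0])

lemma hurwitz_norm_nat: "q \<in> hurwitz \<Longrightarrow> \<exists>k::nat. qnorm q = of_nat k"
proof (elim hurwitzE)
  fix x y z w :: int
  assume q: "q = Quat (of_int x + of_int w / 2) (of_int y + of_int w / 2)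
                   (of_int z + of_int w / 2) (of_int w / 2)"
  have "qnorm q = of_int (x^2 + y^2 + z^2 + w*(x+y+z) + w^2)"
    unfolding q by (simp add: field_simps power2_eq_square)
  moreover have "qnorm q \<ge> 0" by (rule qnorm_nonneg)
  ultimately have "(0::rat) \<le> of_int (x^2 + y^2 + z^2 + w*(x+y+z) + w^2)" by simp
  then have "x^2 + y^2 + z^2 + w*(x+y+z) + w^2 \<ge> 0" by linarith
  then obtain k where "x^2 + y^2 + z^2 + w*(x+y+z) + w^2 = int k" using nonneg_int_cases by metis
  with \<open>qnorm q = _\<close> show ?thesis by auto
qed

definition rnd :: "rat \<Rightarrow> int" where "rnd r = \<lfloor>r + 1/2\<rfloor>"

lemma rnd_bounds: "r - of_int (rnd r) < 1/2" "r - of_int (rnd r) \<ge> -1/2"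
  unfolding rnd_def
  using floor_correct[of "r + 1/2"] by linarith+

lemma rnd_sq: "(r - of_int (rnd r))^2 \<le> 1/4"
proof -
  have "\<bar>r - of_int (rnd r)\<bar> \<le> 1/2" using rnd_bounds[of r] by linarith
  then have "\<bar>r - of_int (rnd r)\<bar>^2 \<le> (1/2)^2"
    by (rule power_mono) simp
  then show ?thesis by (simp add: power2_eq_square)
qed

lemma rnd_sq_eq: "(r - of_int (rnd r))^2 = 1/4 \<Longrightarrow> r = of_int (rnd r) - 1/2"
proof -
  assume a: "(r - of_int (rnd r))^2 = 1/4"
  define e where "e = r - of_int (rnd r)"
  have "e^2 = (1/2)^2" using a by (simp add: e_def power2_eq_square)
  then have "e = 1/2 \<or> e = -1/2" by (simp add: power2_eq_iff)
  then have "e = -1/2" using rnd_bounds[of r] unfolding e_def by auto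
  then show ?thesis unfolding e_def by auto
qed

lemma round_quat: "\<exists>q\<in>hurwitz. qnorm (qsub z q) < 1"
proof (cases z)
  case (Quat a b c d)
  let ?A = "(a - of_int (rnd a))^2" and ?B = "(b - of_int (rnd b))^2"
  and ?C = "(c - of_int (rnd c))^2" and ?D = "(d - of_int (rnd d))^2"
  show ?thesis
  proof (cases "?A < 1/4 \<or> ?B < 1/4 \<or> ?C < 1/4 \<or> ?D < 1/4")
    case True
    let ?q = "Quat (of_int (rnd a)) (of_int (rnd b)) (of_int (rnd c)) (of_int (rnd d))"
    have h: "?q \<in> hurwitz"
      by (rule hurwitzI[of _ "rnd a - rnd d" "2 * rnd d" _ "rnd b - rnd d" _ "rnd c - rnd d"]) simp_all
    have n: "qnorm (qsub z ?q) = ?A + ?B + ?C + ?D"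
      by (simp add: Quat qsub_def)
    have l: "?A + ?B + ?C + ?D < 1"
      using True rnd_sq[of a] rnd_sq[of b] rnd_sq[of c] rnd_sq[of d] by linarith
    show ?thesis by (rule bexI[OF _ h]) (simp only: n l)
  next
    case False
    then have "?A = 1/4" "?B = 1/4" "?C = 1/4" "?D = 1/4"
      using rnd_sq[of a] rnd_sq[of b] rnd_sq[of c] rnd_sq[of d] by linarith+
    then have e: "a = of_int (rnd a) - 1/2" "b = of_int (rnd b) - 1/2"
      "c = of_int (rnd c) - 1/2" "d = of_int (rnd d) - 1/2" by (simp_all add: rnd_sq_eq)
    have "z \<in> hurwitz"
      unfolding Quat
      by (rule hurwitzI[of _ "rnd a - rnd d" "2 * rnd d - 1" _ "rnd b - rnd d" _ "rnd c - rnd d"])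
         (subst e; simp add: field_simps)+
    moreover have "qnorm (qsub z z) = 0" by (simp add: qsub_self qzero_def)
    ultimately show ?thesis by (metis zero_less_one)
  qed
qed


lemma hurwitz_div:
  assumes "x \<in> hurwitz" "g \<in> hurwitz" "g \<noteq> qzero"
  shows "\<exists>q\<in>hurwitz. qnorm (qsub x (qmul g q)) < qnorm g"
proof -
  define n where "n = qnorm g"
  have n0: "n > 0" using assms(3) qnorm_zero_iff[of g] qnorm_nonneg[of g] unfolding n_def by auto
  define z where "z = qsmult (1/n) (qmul (qconj g) x)"
  have gz: "qmul g z = x"
  proof -
    have "qmul g z = qsmult (1/n) (qmul (qmul g (qconj g)) x)"
      unfolding z_def qmul_smult_right qmul_assoc ..
    also have "\<dots> = qsmult (1/n) (qsmult n x)"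
      unfolding qmul_conj qmul_smult_left n_def by simp
    also have "\<dots> = x" unfolding qsmult_smult using n0 by simp
    finally show ?thesis .
  qed
  obtain q where q: "q \<in> hurwitz" "qnorm (qsub z q) < 1" using round_quat by blast
  have "qsub x (qmul g q) = qmul g (qsub z q)"
    unfolding qmul_qsub_right gz ..
  then have "qnorm (qsub x (qmul g q)) = n * qnorm (qsub z q)"
    by (simp add: qnorm_mul n_def)
  also have "\<dots> < n * 1" using q(2) n0 by (intro mult_strict_left_mono) auto
  finally show ?thesis using q(1) unfolding n_def by auto
qed

lemma exists_min:
  assumes "h \<in> I" "h \<noteq> qzero" "I \<subseteq> hurwitz"
  shows "\<exists>g\<in>I. g \<noteq> qzero \<and> (\<forall>h\<in>I. h \<noteq> qzero \<longrightarrow> qnorm g \<le> qnorm h)"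
proof -
  define P where "P k \<longleftrightarrow> (\<exists>h\<in>I. h \<noteq> qzero \<and> qnorm h = of_nat k)" for k :: nat
  obtain k0 where "qnorm h = of_nat k0" using hurwitz_norm_nat assms by blast
  then have "P k0" using assms unfolding P_def by blast
  define k where "k = (LEAST k. P k)"
  have "P k" unfolding k_def using \<open>P k0\<close> by (rule LeastI)
  then obtain g where g: "g \<in> I" "g \<noteq> qzero" "qnorm g = of_nat k" unfolding P_def by blast
  have "\<forall>h\<in>I. h \<noteq> qzero \<longrightarrow> qnorm g \<le> qnorm h"
  proof (intro ballI impI)
    fix h assume h: "h \<in> I" "h \<noteq> qzero"
    obtain j where j: "qnorm h = of_nat j" using hurwitz_norm_nat h assms(3) by blast
    then have "P j" using h unfolding P_def by blast
    then have "k \<le> j" unfolding k_def by (rule Least_le)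
    then show "qnorm g \<le> qnorm h" using g(3) j by simp
  qed
  then show ?thesis using g by blast
qed

lemma principal:
  assumes I: "I \<subseteq> hurwitz" "\<And>x y. x \<in> I \<Longrightarrow> y \<in> I \<Longrightarrow> qsub x y \<in> I"
    "\<And>x r. x \<in> I \<Longrightarrow> r \<in> hurwitz \<Longrightarrow> qmul x r \<in> I"
  and g: "g \<in> I" "g \<noteq> qzero" "\<forall>h\<in>I. h \<noteq> qzero \<longrightarrow> qnorm g \<le> qnorm h"
  and x: "x \<in> I"
  shows "\<exists>r\<in>hurwitz. x = qmul g r"
proof -
  have "x \<in> hurwitz" "g \<in> hurwitz" using I(1) x g(1) by auto
  then obtain q where q: "q \<in> hurwitz" "qnorm (qsub x (qmul g q)) < qnorm g"
    using hurwitz_div g(2) by blast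
  have "qsub x (qmul g q) \<in> I" using I(2)[OF x I(3)[OF g(1) q(1)]] .
  then have "qsub x (qmul g q) = qzero" using g(3) q(2) by force
  then have "x = qmul g q" by (rule qsub_eq0)
  then show ?thesis using q(1) by blast
qed


abbreviation zp2 :: "int \<Rightarrow> (zp_elt \<times> zp_elt) set" where "zp2 p \<equiv> zp p \<times> zp p"
abbreviation zpi :: "int \<Rightarrow> int \<Rightarrow> zp_elt" where "zpi \<equiv> zp_of_int"
definition z0 :: "zp_elt \<times> zp_elt" where "z0 = (\<lambda>_. 0, \<lambda>_. 0)"

lemma vadd_mem: "p > 1 \<Longrightarrow> u \<in> zp2 p \<Longrightarrow> w \<in> zp2 p \<Longrightarrow> vadd p u w \<in> zp2 p"
  by (auto simp: vadd_def intro: zp_add_mem)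

lemma vsc_mem: "p > 1 \<Longrightarrow> s \<in> zp p \<Longrightarrow> u \<in> zp2 p \<Longrightarrow> vsc p s u \<in> zp2 p"
  by (auto simp: vsc_def intro: zp_mul_mem)

lemma m2_vec_mem: assumes "p > 1" "A \<in> m2_carrier p" "u \<in> zp2 p" shows "m2_vec p A u \<in> zp2 p"
  using assms by (cases u) (auto simp: m2_carrier_def intro!: zp_add_mem zp_mul_mem)

lemma zp_one_mul: "f \<in> zp p \<Longrightarrow> zp_mul p (zpi p 1) f = f"
proof (rule ext)
  fix n assume f: "f \<in> zp p"
  have "zp_mul p (zpi p 1) f n = f n mod p ^ n" by (simp add: zp_mul_def zp_of_int_def modsimps)
  then show "zp_mul p (zpi p 1) f n = f n" using zp_self_mod[OF f] by simp
qed

lemma vsc_one: "u \<in> zp2 p \<Longrightarrow> vsc p (zpi p 1) u = u"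
  by (cases u) (simp add: vsc_def zp_one_mul)

lemma vsc_vsc: "vsc p s (vsc p t u) = vsc p (zp_mul p s t) u"
  by (simp add: vsc_def zp_mul_assoc)

lemma zp_mul_int: "zp_mul p (zpi p a) (zpi p b) = zpi p (a * b)"
  by (rule ext) (simp add: zp_mul_def zp_of_int_def modsimps)

lemma vsc_add_int: "vadd p (vsc p (zpi p a) u) (vsc p (zpi p b) u) = vsc p (zpi p (a + b)) u"
  by (simp add: vadd_def vsc_def zp_add_def zp_mul_def zp_of_int_def modsimps,
      simp add: algebra_simps)

lemma vsc_distrib: "vsc p s (vadd p u w) = vadd p (vsc p s u) (vsc p s w)"
  by (simp add: vadd_def vsc_def zp_add_def zp_mul_def modsimps,
      simp add: algebra_simps)

lemma zp_fix_double: assumes "f \<in> zp p" "zp_add p f f = f" shows "f = (\<lambda>_. 0)"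
proof (rule ext)
  fix n
  have e: "(f n + f n) mod p ^ n = f n" using fun_cong[OF assms(2), of n] by (simp add: zp_add_def)
  have m: "0 \<le> f n" "f n < p ^ n" using zp_mem[OF assms(1)] by auto
  have "(f n + f n) mod p ^ n = f n mod p ^ n" using e zp_self_mod[OF assms(1)] by simp
  then have "p ^ n dvd (f n + f n) - f n" by (simp add: mod_eq_dvd_iff)
  then have "p ^ n dvd f n" by simp
  then show "f n = 0" using m by (metis zdvd_not_zless order_le_less)
qed

lemma mod_sum0: "((A::int) + B) mod q = 0 \<Longrightarrow> A mod q = (- B) mod q"
proof -
  assume h: "(A + B) mod q = 0"
  have "A mod q = ((A + B) - B) mod q" by simp
  also have "\<dots> = ((A + B) mod q - B) mod q" by (simp only: mod_diff_left_eq)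
  also have "\<dots> = (- B) mod q" using h by simp
  finally show ?thesis .
qed

lemma qsmult_zero: "qsmult 0 x = qzero"
  by (cases x) (simp add: qzero_def)
lemma qadd_zero: "qadd qzero qzero = qzero"
  by (simp add: qzero_def)
lemma qsmult_Suc: "qsmult (of_nat (Suc k)) x = qadd (qsmult (of_nat k) x) x"
  by (cases x) (simp add: algebra_simps)
lemma qsmult_neg: "qadd (qsmult (- of_nat k) x) (qsmult (of_nat k) x) = qzero"
  by (cases x) (simp add: qzero_def)

context
  fixes p :: int and \<psi> :: "quat \<Rightarrow> m2"
  assumes p1: "p > 1" and iso: "hurwitz_iso p \<psi>"
begin

lemma psi_car: "x \<in> hurwitz \<Longrightarrow> \<psi> x \<in> m2_carrier p"
  using iso unfolding hurwitz_iso_def by blast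

lemma psi_add: "x \<in> hurwitz \<Longrightarrow> y \<in> hurwitz \<Longrightarrow>
  m2_vec p (\<psi> (qadd x y)) u = vadd p (m2_vec p (\<psi> x) u) (m2_vec p (\<psi> y) u)"
  using iso unfolding hurwitz_iso_def by (simp add: m2_vec_add)

lemma psi_mul: "x \<in> hurwitz \<Longrightarrow> y \<in> hurwitz \<Longrightarrow>
  m2_vec p (\<psi> (qmul x y)) u = m2_vec p (\<psi> x) (m2_vec p (\<psi> y) u)"
  using iso unfolding hurwitz_iso_def by (simp add: m2_vec_mul)

lemma psi_vec_mem: "x \<in> hurwitz \<Longrightarrow> u \<in> zp2 p \<Longrightarrow> m2_vec p (\<psi> x) u \<in> zp2 p"
  using m2_vec_mem[OF p1 psi_car] by blast

lemma psi_zero: assumes "u \<in> zp2 p" shows "m2_vec p (\<psi> qzero) u = z0"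
proof -
  define w where "w = m2_vec p (\<psi> qzero) u"
  have wm: "w \<in> zp2 p" unfolding w_def using psi_vec_mem[OF hurwitz_zero assms] .
  have "w = vadd p w w" unfolding w_def
    using psi_add[OF hurwitz_zero hurwitz_zero, of u] by (simp add: qadd_zero)
  then have "zp_add p (fst w) (fst w) = fst w" "zp_add p (snd w) (snd w) = snd w"
    by (metis fst_conv vadd_def, metis snd_conv vadd_def)
  then have "fst w = (\<lambda>_. 0)" "snd w = (\<lambda>_. 0)" using wm zp_fix_double[of "fst w" p] zp_fix_double[of "snd w" p] by auto
  then show ?thesis unfolding w_def z0_def by (metis prod.collapse)
qed

lemma psi_smult_nat: assumes "x \<in> hurwitz" "u \<in> zp2 p"
  shows "m2_vec p (\<psi> (qsmult (of_nat k) x)) u = vsc p (zpi p (int k)) (m2_vec p (\<psi> x) u)"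
proof (induction k)
  case 0
  have "vsc p (zpi p 0) w = z0" for w
    by (simp add: vsc_def z0_def zp_mul_def zp_of_int_def)
  then show ?case using psi_zero[OF assms(2)] by (simp add: qsmult_zero)
next
  case (Suc k)
  have hk: "qsmult (of_nat k) x \<in> hurwitz" using hurwitz_smult[OF assms(1), of "int k"] by simp
  have wm: "m2_vec p (\<psi> x) u \<in> zp2 p" using psi_vec_mem[OF assms] .
  have "m2_vec p (\<psi> (qsmult (of_nat (Suc k)) x)) u =
      vadd p (vsc p (zpi p (int k)) (m2_vec p (\<psi> x) u)) (m2_vec p (\<psi> x) u)"
    unfolding qsmult_Suc psi_add[OF hk assms(1)] Suc ..
  also have "\<dots> = vadd p (vsc p (zpi p (int k)) (m2_vec p (\<psi> x) u)) (vsc p (zpi p 1) (m2_vec p (\<psi> x) u))"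
    using vsc_one[OF wm] by simp
  also have "\<dots> = vsc p (zpi p (int (Suc k))) (m2_vec p (\<psi> x) u)"
    unfolding vsc_add_int by (simp add: add.commute)
  finally show ?case .
qed

lemma psi_smult: assumes "x \<in> hurwitz" "u \<in> zp2 p"
  shows "m2_vec p (\<psi> (qsmult (of_int a) x)) u = vsc p (zpi p a) (m2_vec p (\<psi> x) u)"
proof (cases "a \<ge> 0")
  case True
  then obtain k where "a = int k" using nonneg_int_cases by metis
  then show ?thesis using psi_smult_nat[OF assms, of k] by simp
next
  case False
  then obtain k where a: "a = - int k" by (metis neg_int_cases not_le less_imp_le minus_minus)
  have hk: "qsmult (- of_nat k) x \<in> hurwitz" using hurwitz_smult[OF assms(1), of "- int k"] by simp
  have hk': "qsmult (of_nat k) x \<in> hurwitz" using hurwitz_smult[OF assms(1), of "int k"] by simp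
  define w where "w = m2_vec p (\<psi> x) u"
  define w' where "w' = m2_vec p (\<psi> (qsmult (- of_nat k) x)) u"
  have wm: "w \<in> zp2 p" unfolding w_def using psi_vec_mem[OF assms] .
  have wm': "w' \<in> zp2 p" unfolding w'_def using psi_vec_mem[OF hk assms(2)] .
  have "vadd p w' (vsc p (zpi p (int k)) w) = z0"
    using psi_add[OF hk hk', of u] psi_zero[OF assms(2)] psi_smult_nat[OF assms, of k]
    unfolding qsmult_neg w_def w'_def by simp
  then have c: "zp_add p (fst w') (zp_mul p (zpi p (int k)) (fst w)) = (\<lambda>_. 0)"
         "zp_add p (snd w') (zp_mul p (zpi p (int k)) (snd w)) = (\<lambda>_. 0)"
    unfolding vadd_def vsc_def z0_def by auto
  have "fst w' = zp_mul p (zpi p (- int k)) (fst w)"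
  proof (rule zp_eqI)
    show "fst w' \<in> zp p" using wm' by auto
    show "zp_mul p (zpi p (- int k)) (fst w) \<in> zp p" using wm zp_mul_mem[OF p1 zp_of_int_mem[OF p1]] by auto
    fix n
    have "(fst w' n + int k * fst w n) mod p ^ n = 0"
      using fun_cong[OF c(1), of n] by (simp add: zp_add_def zp_mul_def zp_of_int_def modsimps)
    then show "fst w' n mod p ^ n = zp_mul p (zpi p (- int k)) (fst w) n mod p ^ n"
      by (simp add: mod_sum0 zp_mul_def zp_of_int_def modsimps)
  qed
  moreover have "snd w' = zp_mul p (zpi p (- int k)) (snd w)"
  proof (rule zp_eqI)
    show "snd w' \<in> zp p" using wm' by auto
    show "zp_mul p (zpi p (- int k)) (snd w) \<in> zp p" using wm zp_mul_mem[OF p1 zp_of_int_mem[OF p1]] by auto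
    fix n
    have "(snd w' n + int k * snd w n) mod p ^ n = 0"
      using fun_cong[OF c(2), of n] by (simp add: zp_add_def zp_mul_def zp_of_int_def modsimps)
    then show "snd w' n mod p ^ n = zp_mul p (zpi p (- int k)) (snd w) n mod p ^ n"
      by (simp add: mod_sum0 zp_mul_def zp_of_int_def modsimps)
  qed
  ultimately have "w' = vsc p (zpi p (- int k)) w" unfolding vsc_def by (metis prod.collapse)
  then show ?thesis unfolding a w_def w'_def by simp
qed

end


lemma zp_dvd_high: assumes "d \<in> zp p" "d K = 0" "K \<le> j" shows "p ^ K dvd d j"
proof -
  obtain i where j: "j = K + i" using assms(3) le_Suc_ex by blast
  have "d j mod p ^ K = 0" using zp_canon[OF assms(1), of K i] assms(2) j by simp
  then show ?thesis by (simp add: mod_eq_0_iff_dvd)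
qed

lemma zp_divide:
  assumes p1: "p > 1" and d: "d \<in> zp p" "d K = 0"
  shows "\<exists>z\<in>zp p. d = zp_mul p (zpi p (p ^ K)) z"
proof -
  define z where "z n = (d (n + K) div p ^ K) mod p ^ n" for n
  have dv: "d (n + K) = p ^ K * (d (n + K) div p ^ K)" for n
    using zp_dvd_high[OF d, of "n + K"] by simp
  have zm: "z \<in> zp p"
  proof (rule zp_modI[OF p1])
    fix n
    have c: "d (Suc n + K) mod p ^ (n + K) = d (n + K)"
      using zp_canon[OF d(1), of "n + K" 1] by simp
    define t where "t = d (Suc n + K) div p ^ (n + K)"
    have t0: "t * p ^ (n + K) + d (Suc n + K) mod p ^ (n + K) = d (Suc n + K)"
      unfolding t_def by (rule div_mult_mod_eq)
    have t: "d (Suc n + K) = d (n + K) + p ^ (n + K) * t"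
      using t0 c by (simp add: mult.commute)
    have "p ^ K * (d (Suc n + K) div p ^ K) = p ^ K * (d (n + K) div p ^ K + p ^ n * t)"
      using dv[of "Suc n"] dv[of n] t by (simp add: power_add algebra_simps)
    then have e: "d (Suc n + K) div p ^ K = d (n + K) div p ^ K + p ^ n * t"
      using p1 by simp
    have "z (Suc n) mod p ^ n = (d (Suc n + K) div p ^ K) mod p ^ n"
      unfolding z_def by (rule mod_pow_Suc)
    also have "\<dots> = (d (n + K) div p ^ K) mod p ^ n" unfolding e by simp
    finally show "z (Suc n) mod p ^ n = z n mod p ^ n" unfolding z_def by simp
  qed (simp add: z_def)
  have "d = zp_mul p (zpi p (p ^ K)) z"
  proof (rule zp_eqI[OF d(1) zp_mul_mem[OF p1 zp_of_int_mem[OF p1] zm]])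
    fix n
    have "zp_mul p (zpi p (p ^ K)) z n mod p ^ n = (p ^ K * (d (n + K) div p ^ K)) mod p ^ n"
      by (simp add: zp_mul_def zp_of_int_def z_def modsimps)
    also have "\<dots> = d (n + K) mod p ^ n" using dv[of n] by simp
    also have "\<dots> = d n" using zp_canon[OF d(1), of n K] .
    also have "\<dots> = d n mod p ^ n" using zp_self_mod[OF d(1)] by simp
    finally show "d n mod p ^ n = zp_mul p (zpi p (p ^ K)) z n mod p ^ n" by simp
  qed
  then show ?thesis using zm by blast
qed

lemma zp_inverse:
  assumes p1: "p > 1" and cop: "coprime b p"
  shows "\<exists>r\<in>zp p. zp_mul p (zpi p b) r = zpi p 1"
proof -
  have cop': "coprime b (p ^ n)" for n using cop by simp
  have ex: "\<exists>s. (b * s) mod p ^ n = 1 mod p ^ n" for n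
  proof -
    obtain u v where "u * b + v * p ^ n = gcd b (p ^ n)" using bezout_int by blast
    then have "u * b + v * p ^ n = 1" using cop'[of n] by simp
    then have "(b * u) mod p ^ n = 1 mod p ^ n"
      by (metis mod_mult_self2 mult.commute)
    then show ?thesis by blast
  qed
  define r where "r n = (SOME s. (b * s) mod p ^ n = 1 mod p ^ n) mod p ^ n" for n
  have rc: "(b * r n) mod p ^ n = 1 mod p ^ n" for n
  proof -
    have "(b * (SOME s. (b * s) mod p ^ n = 1 mod p ^ n)) mod p ^ n = 1 mod p ^ n"
      using someI_ex[OF ex[of n]] .
    then show ?thesis unfolding r_def by (simp add: mod_mult_right_eq)
  qed
  have rm: "r \<in> zp p"
  proof (rule zp_modI[OF p1])
    fix n
    have "(b * r (Suc n)) mod p ^ Suc n mod p ^ n = 1 mod p ^ Suc n mod p ^ n"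
      using rc[of "Suc n"] by simp
    then have "(b * r (Suc n)) mod p ^ n = (b * r n) mod p ^ n"
      unfolding mod_pow_Suc rc[of n] .
    then have "p ^ n dvd b * r (Suc n) - b * r n" by (simp add: mod_eq_dvd_iff)
    then have "p ^ n dvd b * (r (Suc n) - r n)" by (simp add: right_diff_distrib)
    then have "p ^ n dvd r (Suc n) - r n"
      using cop'[of n] coprime_commute coprime_dvd_mult_right_iff by blast
    then show "r (Suc n) mod p ^ n = r n mod p ^ n" by (simp add: mod_eq_dvd_iff)
  qed (simp add: r_def)
  have "zp_mul p (zpi p b) r = zpi p 1"
  proof (rule ext)
    fix n
    show "zp_mul p (zpi p b) r n = zpi p 1 n"
      using rc[of n] by (simp add: zp_mul_def zp_of_int_def modsimps)
  qed
  then show ?thesis using rm by blast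
qed

lemma vadd_comm: "vadd p u w = vadd p w u"
  by (simp add: vadd_def zp_add_def add.commute)

lemma vadd_cancel: assumes "a \<in> zp2 p" shows "vadd p (vadd p a b) (vsc p (zpi p (-1)) b) = a"
proof -
  have "zp_add p (zp_add p f g) (zp_mul p (zpi p (-1)) g) = f" if "f \<in> zp p" for f g
  proof (rule ext)
    fix n
    have "zp_add p (zp_add p f g) (zp_mul p (zpi p (-1)) g) n = f n mod p ^ n"
      by (simp add: zp_add_def zp_mul_def zp_of_int_def modsimps)
    then show "zp_add p (zp_add p f g) (zp_mul p (zpi p (-1)) g) n = f n"
      using zp_self_mod[OF that] by simp
  qed
  then show ?thesis using assms by (cases a) (auto simp: vadd_def vsc_def)
qed

lemma m2_one_vec: assumes "u \<in> zp2 p" shows "m2_vec p (m2_one p) u = u"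
proof -
  have "zp_add p (zp_mul p (zpi p 1) f) (zp_mul p (zpi p 0) g) = f" if "f \<in> zp p" for f g
  proof (rule ext)
    fix n
    have "zp_add p (zp_mul p (zpi p 1) f) (zp_mul p (zpi p 0) g) n = f n mod p ^ n"
      by (simp add: zp_add_def zp_mul_def zp_of_int_def modsimps)
    then show "zp_add p (zp_mul p (zpi p 1) f) (zp_mul p (zpi p 0) g) n = f n"
      using zp_self_mod[OF that] by simp
  qed
  moreover have "zp_add p (zp_mul p (zpi p 0) f) (zp_mul p (zpi p 1) g) = g" if "g \<in> zp p" for f g
  proof (rule ext)
    fix n
    have "zp_add p (zp_mul p (zpi p 0) f) (zp_mul p (zpi p 1) g) n = g n mod p ^ n"
      by (simp add: zp_add_def zp_mul_def zp_of_int_def modsimps)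
    then show "zp_add p (zp_mul p (zpi p 0) f) (zp_mul p (zpi p 1) g) n = g n"
      using zp_self_mod[OF that] by simp
  qed
  ultimately show ?thesis using assms by (cases u) (auto simp: m2_one_def)
qed

lemma qmul_inv_comm:
  assumes "qmul g r = qsmult n qone" "g \<noteq> qzero"
  shows "qmul r g = qsmult n qone"
proof -
  have ng: "qnorm g \<noteq> 0" using assms(2) qnorm_zero_iff by simp
  have "qmul (qconj g) (qmul g r) = qsmult (qnorm g) r"
    unfolding qmul_assoc[symmetric] qmul_conj' qmul_smult_left by simp
  also have "qmul (qconj g) (qmul g r) = qsmult n (qconj g)"
    unfolding assms(1) qmul_smult_right by simp
  finally have e: "qsmult (qnorm g) r = qsmult n (qconj g)" ..
  have "qsmult (qnorm g) (qmul r g) = qmul (qsmult (qnorm g) r) g"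
    by (simp add: qmul_smult_left)
  also have "\<dots> = qsmult n (qsmult (qnorm g) qone)"
    unfolding e qmul_smult_left qmul_conj' ..
  also have "\<dots> = qsmult (qnorm g) (qsmult n qone)" by (simp add: qsmult_smult mult.commute)
  finally have "qsmult (1 / qnorm g) (qsmult (qnorm g) (qmul r g)) =
                qsmult (1 / qnorm g) (qsmult (qnorm g) (qsmult n qone))" by simp
  then show ?thesis using ng by (simp add: qsmult_smult)
qed


lemma vadd_cancel2: assumes "a \<in> zp2 p" shows "vadd p (vadd p a (vsc p (zpi p (-1)) b)) b = a"
proof -
  have "zp_add p (zp_add p f (zp_mul p (zpi p (-1)) g)) g = f" if "f \<in> zp p" for f g
  proof (rule ext)
    fix n
    have "zp_add p (zp_add p f (zp_mul p (zpi p (-1)) g)) g n = f n mod p ^ n"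
      by (simp add: zp_add_def zp_mul_def zp_of_int_def modsimps)
    then show "zp_add p (zp_add p f (zp_mul p (zpi p (-1)) g)) g n = f n"
      using zp_self_mod[OF that] by simp
  qed
  then show ?thesis using assms by (cases a) (auto simp: vadd_def vsc_def)
qed

lemma vsc_level: "fst (vsc p (zpi p (s K)) w) K = fst (vsc p s w) K"
  "snd (vsc p (zpi p (s K)) w) K = snd (vsc p s w) K"
  by (simp_all add: vsc_def zp_mul_def zp_of_int_def modsimps)

lemma vadd_level: "fst (vadd p a b) K = (fst a K + fst b K) mod p ^ K"
  "snd (vadd p a b) K = (snd a K + snd b K) mod p ^ K"
  by (simp_all add: vadd_def zp_add_def)

lemma zp_scale_vsc: "zp_scale p a X = vsc p (zpi p (p ^ a)) ` X"
  unfolding zp_scale_def vsc_def ..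

lemma vsc_int_mult: "vsc p (zpi p (a * b)) w = vsc p (zpi p a) (vsc p (zpi p b) w)"
  by (simp add: vsc_vsc zp_mul_int)

context
  fixes p :: int and L :: "(zp_elt \<times> zp_elt) set"
  assumes p1: "p > 1" and lat: "zp_lattice p L"
begin

lemma lat_sub: "L \<subseteq> zp2 p" using lat unfolding zp_lattice_def by blast

lemma lat_add: "u \<in> L \<Longrightarrow> w \<in> L \<Longrightarrow> vadd p u w \<in> L"
  using lat unfolding zp_lattice_def vadd_def by blast

lemma lat_sc: "s \<in> zp p \<Longrightarrow> u \<in> L \<Longrightarrow> vsc p s u \<in> L"
  using lat unfolding zp_lattice_def vsc_def by blast

lemma lat_pow: "\<exists>n. \<forall>w\<in>zp2 p. vsc p (zpi p (p ^ n)) w \<in> L"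
proof -
  obtain n where "\<forall>x\<in>zp p. \<forall>y\<in>zp p. (zp_mul p (zpi p (p ^ n)) x, zp_mul p (zpi p (p ^ n)) y) \<in> L"
    using lat unfolding zp_lattice_def by blast
  then have "\<forall>w\<in>zp2 p. vsc p (zpi p (p ^ n)) w \<in> L" unfolding vsc_def by auto
  then show ?thesis by blast
qed

lemma lat_dvd:
  assumes "\<forall>w\<in>zp2 p. vsc p (zpi p (p ^ n)) w \<in> L" "p ^ n dvd a" "w \<in> zp2 p"
  shows "vsc p (zpi p a) w \<in> L"
proof -
  obtain b where a: "a = p ^ n * b" using assms(2) by blast
  have "vsc p (zpi p b) w \<in> zp2 p" using vsc_mem[OF p1 zp_of_int_mem[OF p1] assms(3)] .
  from bspec[OF assms(1) this] show ?thesis unfolding a vsc_int_mult .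
qed

lemma lat_unit:
  assumes "coprime b p"
  shows "vsc p (zpi p b) ` L = L"
proof
  show "vsc p (zpi p b) ` L \<subseteq> L" using lat_sc zp_of_int_mem[OF p1] by blast
  obtain r where r: "r \<in> zp p" "zp_mul p (zpi p b) r = zpi p 1" using zp_inverse[OF p1 assms] by blast
  show "L \<subseteq> vsc p (zpi p b) ` L"
  proof
    fix v assume v: "v \<in> L"
    have "vsc p (zpi p b) (vsc p r v) = v"
      unfolding vsc_vsc r(2) using vsc_one v lat_sub by blast
    moreover have "vsc p r v \<in> L" using lat_sc[OF r(1) v] .
    ultimately show "v \<in> vsc p (zpi p b) ` L" by (metis image_eqI)
  qed
qed

end


lemma Mv_cancel:
  "vadd p (m2_vec p (M2 v1 (zpi p 0) v2 (zpi p 0)) (u1, u2)) (vsc p (zpi p (-1)) (vsc p u1 (v1, v2)))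
   = (\<lambda>_. 0, \<lambda>_. 0)"
  apply (simp add: vadd_def vsc_def zp_mul_def zp_add_def zp_of_int_def modsimps)
  done

context
  fixes p :: int and \<psi> :: "quat \<Rightarrow> m2"
  assumes p1: "p > 1" and iso: "hurwitz_iso p \<psi>"
begin

lemma psi_one_vec: assumes "u \<in> zp2 p" shows "m2_vec p (\<psi> qone) u = u"
proof -
  have "\<psi> qone = m2_one p" using iso unfolding hurwitz_iso_def by blast
  then show ?thesis using m2_one_vec[OF assms] by simp
qed

lemma img_add: assumes "g \<in> hurwitz" "a \<in> m2_vec p (\<psi> g) ` zp2 p" "b \<in> m2_vec p (\<psi> g) ` zp2 p"
  shows "vadd p a b \<in> m2_vec p (\<psi> g) ` zp2 p"
proof -
  obtain u w where "u \<in> zp2 p" "w \<in> zp2 p" "a = m2_vec p (\<psi> g) u" "b = m2_vec p (\<psi> g) w"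
    using assms by blast
  then have "vadd p a b = m2_vec p (\<psi> g) (vadd p u w)" "vadd p u w \<in> zp2 p"
    using m2_vec_vadd[of p "\<psi> g" u w] vadd_mem[OF p1] by simp_all
  then show ?thesis by (rule image_eqI)
qed

lemma img_sc: assumes "s \<in> zp p" "a \<in> m2_vec p (\<psi> g) ` zp2 p"
  shows "vsc p s a \<in> m2_vec p (\<psi> g) ` zp2 p"
proof -
  obtain u where "u \<in> zp2 p" "a = m2_vec p (\<psi> g) u"
    using assms by blast
  then have "vsc p s a = m2_vec p (\<psi> g) (vsc p s u)" "vsc p s u \<in> zp2 p"
    using m2_vec_vsc[of p "\<psi> g" s u] vsc_mem[OF p1 assms(1)] by simp_all
  then show ?thesis by (rule image_eqI)
qed

lemma img_pK:
  assumes g: "g \<in> hurwitz" and ob: "o' \<in> hurwitz"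
    and N: "qsmult (of_int (p ^ K * R)) qone = qmul g o'" and R: "coprime R p"
    and w: "w \<in> zp2 p"
  shows "vsc p (zpi p (p ^ K)) w \<in> m2_vec p (\<psi> g) ` zp2 p"
proof -
  obtain r where r: "r \<in> zp p" "zp_mul p (zpi p R) r = zpi p 1" using zp_inverse[OF p1 R] by blast
  have rw: "vsc p r w \<in> zp2 p" using vsc_mem[OF p1 r(1) w] .
  have u: "m2_vec p (\<psi> o') (vsc p r w) \<in> zp2 p" using psi_vec_mem[OF p1 iso ob rw] .
  have "m2_vec p (\<psi> g) (m2_vec p (\<psi> o') (vsc p r w)) = m2_vec p (\<psi> (qmul g o')) (vsc p r w)"
    by (rule psi_mul[OF p1 iso g ob, symmetric])
  also have "\<dots> = vsc p (zpi p (p ^ K * R)) (m2_vec p (\<psi> qone) (vsc p r w))"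
    unfolding N[symmetric] by (rule psi_smult[OF p1 iso hurwitz_one rw])
  also have "\<dots> = vsc p (zpi p (p ^ K * R)) (vsc p r w)" by (simp only: psi_one_vec[OF rw])
  also have "\<dots> = vsc p (zp_mul p (zpi p (p ^ K * R)) r) w" by (rule vsc_vsc)
  also have "zp_mul p (zpi p (p ^ K * R)) r = zp_mul p (zpi p (p ^ K)) (zp_mul p (zpi p R) r)"
    by (simp only: zp_mul_int[symmetric] zp_mul_assoc)
  also have "\<dots> = zpi p (p ^ K)" by (simp only: r(2) zp_mul_int mult_1_right)
  finally have "vsc p (zpi p (p ^ K)) w = m2_vec p (\<psi> g) (m2_vec p (\<psi> o') (vsc p r w))" ..
  then show ?thesis using u by (rule image_eqI)
qed

lemma density:
  assumes lat: "zp_lattice p L"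
    and nK: "\<forall>w\<in>zp2 p. vsc p (zpi p (p ^ K)) w \<in> L"
    and R: "coprime R p"
    and g: "g \<in> hurwitz"
    and pK: "\<forall>w\<in>zp2 p. vsc p (zpi p (p ^ K)) w \<in> m2_vec p (\<psi> g) ` zp2 p"
    and cl: "\<And>y. y \<in> hurwitz \<Longrightarrow> (\<forall>u\<in>zp2 p. m2_vec p (\<psi> y) u \<in> L) \<Longrightarrow>
               \<exists>ob\<in>hurwitz. qsmult (of_int R) y = qmul g ob"
    and v: "v \<in> L"
  shows "v \<in> m2_vec p (\<psi> g) ` zp2 p"
proof -
  let ?Img = "m2_vec p (\<psi> g) ` zp2 p"
  have vz: "v \<in> zp2 p" using v lat_sub[OF p1 lat] by blast
  obtain r where r: "r \<in> zp p" "zp_mul p (zpi p R) r = zpi p 1" using zp_inverse[OF p1 R] by blast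
  define v' where "v' = vsc p r v"
  have v'L: "v' \<in> L" unfolding v'_def using lat_sc[OF p1 lat r(1) v] .
  have v'z: "v' \<in> zp2 p" using v'L lat_sub[OF p1 lat] by blast
  have Rv': "vsc p (zpi p R) v' = v"
    unfolding v'_def vsc_vsc r(2) using vsc_one[OF vz] .
  define Mv where "Mv = M2 (fst v') (zpi p 0) (snd v') (zpi p 0)"
  have Mc: "Mv \<in> m2_carrier p" unfolding Mv_def m2_carrier_def
    using v'z zp_of_int_mem[OF p1] by auto
  obtain c :: "nat \<Rightarrow> zp_elt" where c: "\<forall>i<4. c i \<in> zp p"
    "Mv = m2_add p (m2_add p (m2_smult p (c 0) (\<psi> (hurwitz_basis 0)))
                                (m2_smult p (c 1) (\<psi> (hurwitz_basis 1))))
                     (m2_add p (m2_smult p (c 2) (\<psi> (hurwitz_basis 2)))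
                                (m2_smult p (c 3) (\<psi> (hurwitz_basis 3))))"
  proof -
    have H: "\<forall>M\<in>m2_carrier p. \<exists>!c :: nat \<Rightarrow> zp_elt. (\<forall>i<4. c i \<in> zp p) \<and> (\<forall>i\<ge>4. c i = (\<lambda>_. 0)) \<and>
        M = m2_add p (m2_add p (m2_smult p (c 0) (\<psi> (hurwitz_basis 0)))
                                (m2_smult p (c 1) (\<psi> (hurwitz_basis 1))))
                     (m2_add p (m2_smult p (c 2) (\<psi> (hurwitz_basis 2)))
                                (m2_smult p (c 3) (\<psi> (hurwitz_basis 3))))"
      using iso unfolding hurwitz_iso_def by blast
    from ex1_implies_ex[OF bspec[OF H Mc]] show ?thesis using that by blast
  qed
  have cK: "c i \<in> zp p" if "i < 4" for i using c(1) that by blast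
  define b where "b i = qsmult (of_int (c i K)) (hurwitz_basis i)" for i
  have bh: "b i \<in> hurwitz" for i unfolding b_def by (rule hurwitz_smult[OF hurwitz_basis_mem])
  define y where "y = qadd (qadd (b 0) (b 1)) (qadd (b 2) (b 3))"
  have yh: "y \<in> hurwitz" unfolding y_def using bh hurwitz_add by blast
  have yu: "m2_vec p (\<psi> y) u = vadd p (vadd p (vsc p (zpi p (c 0 K)) (m2_vec p (\<psi> (hurwitz_basis 0)) u))
                                          (vsc p (zpi p (c 1 K)) (m2_vec p (\<psi> (hurwitz_basis 1)) u)))
                                   (vadd p (vsc p (zpi p (c 2 K)) (m2_vec p (\<psi> (hurwitz_basis 2)) u))
                                          (vsc p (zpi p (c 3 K)) (m2_vec p (\<psi> (hurwitz_basis 3)) u)))"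
    if u: "u \<in> zp2 p" for u
    unfolding y_def
    using psi_add[OF p1 iso] psi_smult[OF p1 iso hurwitz_basis_mem u] bh hurwitz_add
    unfolding b_def by simp
  have Mu: "m2_vec p Mv u = vadd p (vadd p (vsc p (c 0) (m2_vec p (\<psi> (hurwitz_basis 0)) u))
                                          (vsc p (c 1) (m2_vec p (\<psi> (hurwitz_basis 1)) u)))
                                   (vadd p (vsc p (c 2) (m2_vec p (\<psi> (hurwitz_basis 2)) u))
                                          (vsc p (c 3) (m2_vec p (\<psi> (hurwitz_basis 3)) u)))" for u
    unfolding c(2) m2_vec_add m2_vec_smult ..
  have yL: "m2_vec p (\<psi> y) u \<in> L" if u: "u \<in> zp2 p" for u
  proof -
    define X where "X = vsc p (fst u) v'"
    define D where "D = vadd p (m2_vec p (\<psi> y) u) (vsc p (zpi p (-1)) X)"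
    have lv: "fst (m2_vec p (\<psi> y) u) K = fst (m2_vec p Mv u) K"
             "snd (m2_vec p (\<psi> y) u) K = snd (m2_vec p Mv u) K"
      unfolding yu[OF u] Mu vadd_level vsc_level by simp_all
    have D0: "fst D K = 0" "snd D K = 0"
    proof -
      obtain u1 u2 where uu: "u = (u1, u2)" by (cases u)
      have "vadd p (m2_vec p Mv u) (vsc p (zpi p (-1)) X) = (\<lambda>_. 0, \<lambda>_. 0)"
        unfolding Mv_def X_def uu using Mv_cancel[of p "fst v'" "snd v'" u1 u2] by simp
      then show "fst D K = 0" "snd D K = 0"
        unfolding D_def vadd_level lv by (simp_all only: vadd_level[symmetric]) simp_all
    qed
    have Xz: "X \<in> zp2 p" unfolding X_def using vsc_mem[OF p1 _ v'z] u by auto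
    have Dz: "D \<in> zp2 p" unfolding D_def
      using vadd_mem[OF p1 psi_vec_mem[OF p1 iso yh u] vsc_mem[OF p1 zp_of_int_mem[OF p1] Xz]] .
    obtain z1 where z1: "z1 \<in> zp p" "fst D = zp_mul p (zpi p (p ^ K)) z1"
      using zp_divide[of p "fst D" K, OF p1 _ D0(1)] Dz by (auto simp: mem_Times_iff)
    obtain z2 where z2: "z2 \<in> zp p" "snd D = zp_mul p (zpi p (p ^ K)) z2"
      using zp_divide[of p "snd D" K, OF p1 _ D0(2)] Dz by (auto simp: mem_Times_iff)
    have Dv: "D = vsc p (zpi p (p ^ K)) (z1, z2)" unfolding vsc_def using z1 z2
      by (metis fst_conv snd_conv prod.collapse)
    have "m2_vec p (\<psi> y) u = vadd p D X"
      unfolding D_def using vadd_cancel2[OF psi_vec_mem[OF p1 iso yh u]] by simp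
    moreover have "D \<in> L" unfolding Dv using nK z1(1) z2(1) by blast
    moreover have "X \<in> L" unfolding X_def using lat_sc[OF p1 lat _ v'L] u by auto
    ultimately show ?thesis using lat_add[OF p1 lat] by simp
  qed
  obtain ob where ob: "ob \<in> hurwitz" "qsmult (of_int R) y = qmul g ob" using cl[OF yh] yL by blast
  define e1 where "e1 = (zpi p 1, zpi p 0)"
  have e1z: "e1 \<in> zp2 p" unfolding e1_def using zp_of_int_mem[OF p1] by auto
  have xe1: "m2_vec p (\<psi> (qsmult (of_int R) y)) e1 \<in> ?Img"
    unfolding ob(2) psi_mul[OF p1 iso g ob(1)] using psi_vec_mem[OF p1 iso ob(1) e1z] by (rule imageI)
  define X where "X = vsc p (fst e1) v'"
  define D where "D = vadd p (m2_vec p (\<psi> y) e1) (vsc p (zpi p (-1)) X)"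
  have X: "X = v'" unfolding X_def e1_def using vsc_one[OF v'z] by simp
  have D0: "fst D K = 0" "snd D K = 0"
  proof -
    have lv: "fst (m2_vec p (\<psi> y) e1) K = fst (m2_vec p Mv e1) K"
             "snd (m2_vec p (\<psi> y) e1) K = snd (m2_vec p Mv e1) K"
      unfolding yu[OF e1z] Mu vadd_level vsc_level by simp_all
    have "vadd p (m2_vec p Mv e1) (vsc p (zpi p (-1)) X) = (\<lambda>_. 0, \<lambda>_. 0)"
      unfolding Mv_def X_def e1_def using Mv_cancel[of p "fst v'" "snd v'" "zpi p 1" "zpi p 0"] by simp
    then show "fst D K = 0" "snd D K = 0"
      unfolding D_def vadd_level lv by (simp_all only: vadd_level[symmetric]) simp_all
  qed
  have Xz: "X \<in> zp2 p" unfolding X using v'z .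
  have Dz: "D \<in> zp2 p" unfolding D_def
    using vadd_mem[OF p1 psi_vec_mem[OF p1 iso yh e1z] vsc_mem[OF p1 zp_of_int_mem[OF p1] Xz]] .
  obtain z1 where z1: "z1 \<in> zp p" "fst D = zp_mul p (zpi p (p ^ K)) z1"
    using zp_divide[of p "fst D" K, OF p1 _ D0(1)] Dz by (auto simp: mem_Times_iff)
  obtain z2 where z2: "z2 \<in> zp p" "snd D = zp_mul p (zpi p (p ^ K)) z2"
    using zp_divide[of p "snd D" K, OF p1 _ D0(2)] Dz by (auto simp: mem_Times_iff)
  define z where "z = (z1, z2)"
  have zz: "z \<in> zp2 p" unfolding z_def using z1 z2 by auto
  have Dv: "D = vsc p (zpi p (p ^ K)) z" unfolding vsc_def z_def using z1 z2
    by (metis fst_conv snd_conv prod.collapse)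
  have ye1: "m2_vec p (\<psi> y) e1 = vadd p D v'"
    unfolding D_def X[symmetric] using vadd_cancel2[OF psi_vec_mem[OF p1 iso yh e1z]] by simp
  define T where "T = vsc p (zpi p (p ^ K)) (vsc p (zpi p R) z)"
  have "m2_vec p (\<psi> (qsmult (of_int R) y)) e1 = vsc p (zpi p R) (vadd p D v')"
    unfolding psi_smult[OF p1 iso yh e1z] ye1 ..
  also have "\<dots> = vadd p T v"
    unfolding vsc_distrib Rv' T_def Dv vsc_int_mult[symmetric] by (simp add: mult.commute)
  finally have xe: "m2_vec p (\<psi> (qsmult (of_int R) y)) e1 = vadd p T v" .
  have TI: "T \<in> ?Img" unfolding T_def
    using bspec[OF pK vsc_mem[OF p1 zp_of_int_mem[OF p1] zz]] .
  have "v = vadd p (vadd p v T) (vsc p (zpi p (-1)) T)" using vadd_cancel[OF vz] by simp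
  also have "\<dots> \<in> ?Img"
  proof -
    have "vadd p v T \<in> ?Img" using xe xe1 vadd_comm[of p v T] by simp
    then show ?thesis using img_add[OF g _ img_sc[OF zp_of_int_mem[OF p1] TI]] by simp
  qed
  finally show ?thesis .
qed

end


theorem theorem2p1:
  fixes S :: "nat set"
    and \<psi> :: "nat \<Rightarrow> quat \<Rightarrow> m2"
    and L :: "nat \<Rightarrow> (zp_elt \<times> zp_elt) set"
  assumes "finite S"
    and "\<forall>p\<in>S. prime p"
    and "\<forall>p\<in>S. odd p \<longrightarrow> hurwitz_iso (int p) (\<psi> p)"
    and "\<forall>p\<in>S. odd p \<longrightarrow> zp_lattice (int p) (L p)"
  shows "(\<exists>g\<in>GammaS S. \<forall>p\<in>S. odd p \<longrightarrow> maps_vertex S p (\<psi> p) g (zp_std (int p)) (L p))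
       \<and> (\<exists>C\<in>GammaBarS S. \<forall>g\<in>C. \<forall>p\<in>S. odd p \<longrightarrow>
              maps_vertex S p (\<psi> p) g (zp_std (int p)) (L p))"
proof -
  define P where "P = {p \<in> S. odd p}"
  have finP: "finite P" using assms(1) unfolding P_def by simp
  have PS: "P \<subseteq> S" unfolding P_def by blast
  have prS: "\<And>p. p \<in> S \<Longrightarrow> prime p" using assms(2) by blast
  have p1: "int p > 1" if "p \<in> P" for p
  proof -
    have "prime p" using prS PS that by blast
    then have "p > 1" by (rule prime_gt_1_nat)
    then show ?thesis by simp
  qed
  have iso: "\<And>p. p \<in> P \<Longrightarrow> hurwitz_iso (int p) (\<psi> p)" using assms(3) unfolding P_def by blast
  have lat: "\<And>p. p \<in> P \<Longrightarrow> zp_lattice (int p) (L p)" using assms(4) unfolding P_def by blast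
  have "\<forall>p\<in>P. \<exists>n. \<forall>w\<in>zp2 (int p). vsc (int p) (zpi (int p) (int p ^ n)) w \<in> L p"
  proof (intro ballI)
    fix p assume pP: "p \<in> P"
    show "\<exists>n. \<forall>w\<in>zp2 (int p). vsc (int p) (zpi (int p) (int p ^ n)) w \<in> L p"
      by (rule lat_pow[OF p1[OF pP] lat[OF pP]])
  qed
  from bchoice[OF this] obtain nL where nL: "\<forall>p\<in>P. \<forall>w\<in>zp2 (int p). vsc (int p) (zpi (int p) (int p ^ nL p)) w \<in> L p"
    by (elim exE)
  define K where "K = (\<Sum>p\<in>P. nL p)"
  have nLK: "nL p \<le> K" if "p \<in> P" for p
    unfolding K_def using member_le_sum[OF that _ finP, of nL] by simp
  have LK: "vsc (int p) (zpi (int p) a) w \<in> L p"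
    if "p \<in> P" "int p ^ K dvd a" "w \<in> zp2 (int p)" for p a w
  proof -
    have "int p ^ nL p dvd int p ^ K" using nLK[OF that(1)] by (rule le_imp_power_dvd)
    then have "int p ^ nL p dvd a" using that(2) by (rule dvd_trans)
    then show ?thesis using lat_dvd[OF p1[OF that(1)] lat[OF that(1)] bspec[OF nL that(1)] _ that(3)] by blast
  qed
  define M where "M = mS S"
  define Q where "Q p = (\<Prod>q\<in>S - {p}. q)" for p
  have MQ: "M = p * Q p" if "p \<in> S" for p
    unfolding M_def mS_def Q_def using prod.remove[OF assms(1) that, of "\<lambda>q. q"] by simp
  have Qcop: "coprime (Q p) p" if "p \<in> S" for p
    unfolding Q_def
  proof (rule prod_coprime_left)
    fix q assume "q \<in> S - {p}"
    then show "coprime q p" using primes_coprime[of q p] prS that by blast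
  qed
  define Rp where "Rp p = int (Q p) ^ K" for p
  have Rcop: "coprime (Rp p) (int p)" if "p \<in> S" for p
    unfolding Rp_def using Qcop[OF that] by simp
  have RpK: "int M ^ K = int p ^ K * Rp p" if "p \<in> S" for p
    unfolding Rp_def MQ[OF that] by (simp add: power_mult_distrib)
  have Rdvd: "int q ^ K dvd Rp p" if "p \<in> S" "q \<in> S" "q \<noteq> p" for p q
  proof -
    have "q dvd Q p" unfolding Q_def using assms(1) that by (intro dvd_prodI) auto
    then have "int q dvd int (Q p)" by simp
    then show ?thesis unfolding Rp_def by (rule dvd_power_same)
  qed
  have M0: "M > 0" unfolding M_def mS_def using prS prime_gt_0_nat
    by (simp add: prod_pos)
  define I where "I = {x \<in> hurwitz. \<forall>p\<in>P. \<forall>u\<in>zp2 (int p). m2_vec (int p) (\<psi> p x) u \<in> L p}"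
  have I_sub: "I \<subseteq> hurwitz" unfolding I_def by blast
  have I_qsub: "qsub x y \<in> I" if "x \<in> I" "y \<in> I" for x y
  proof -
    have xh: "x \<in> hurwitz" and yh: "y \<in> hurwitz" using that I_sub by auto
    have e: "qsub x y = qadd x (qsmult (of_int (-1)) y)" unfolding qsub_def by simp
    have "m2_vec (int p) (\<psi> p (qsub x y)) u \<in> L p" if pP: "p \<in> P" and u: "u \<in> zp2 (int p)" for p u
    proof -
      have "m2_vec (int p) (\<psi> p (qsub x y)) u =
            vadd (int p) (m2_vec (int p) (\<psi> p x) u) (vsc (int p) (zpi (int p) (-1)) (m2_vec (int p) (\<psi> p y) u))"
        unfolding e psi_add[OF p1[OF pP] iso[OF pP] xh hurwitz_smult[OF yh]]
          psi_smult[OF p1[OF pP] iso[OF pP] yh u] ..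
      moreover have "m2_vec (int p) (\<psi> p x) u \<in> L p" "m2_vec (int p) (\<psi> p y) u \<in> L p"
        using that \<open>x \<in> I\<close> \<open>y \<in> I\<close> unfolding I_def by auto
      ultimately show ?thesis
        using lat_add[OF p1[OF pP] lat[OF pP]] lat_sc[OF p1[OF pP] lat[OF pP] zp_of_int_mem[OF p1[OF pP]]]
        by simp
    qed
    then show ?thesis unfolding I_def using hurwitz_sub[OF xh yh] by blast
  qed
  have I_mul: "qmul x r \<in> I" if "x \<in> I" "r \<in> hurwitz" for x r
  proof -
    have xh: "x \<in> hurwitz" using that I_sub by auto
    have "m2_vec (int p) (\<psi> p (qmul x r)) u \<in> L p" if pP: "p \<in> P" and u: "u \<in> zp2 (int p)" for p u
    proof -
      have "m2_vec (int p) (\<psi> p (qmul x r)) u = m2_vec (int p) (\<psi> p x) (m2_vec (int p) (\<psi> p r) u)"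
        by (rule psi_mul[OF p1[OF pP] iso[OF pP] xh \<open>r \<in> hurwitz\<close>])
      moreover have "m2_vec (int p) (\<psi> p r) u \<in> zp2 (int p)"
        by (rule psi_vec_mem[OF p1[OF pP] iso[OF pP] \<open>r \<in> hurwitz\<close> u])
      ultimately show ?thesis using \<open>x \<in> I\<close> pP unfolding I_def by auto
    qed
    then show ?thesis unfolding I_def using hurwitz_mul[OF xh \<open>r \<in> hurwitz\<close>] by blast
  qed
  have I_smult: "qsmult (of_int a) y \<in> I" if "y \<in> hurwitz" "\<forall>p\<in>P. int p ^ K dvd a" for y a
  proof -
    have "m2_vec (int p) (\<psi> p (qsmult (of_int a) y)) u \<in> L p" if pP: "p \<in> P" and u: "u \<in> zp2 (int p)" for p u
      unfolding psi_smult[OF p1[OF pP] iso[OF pP] \<open>y \<in> hurwitz\<close> u]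
      using LK[OF pP _ psi_vec_mem[OF p1[OF pP] iso[OF pP] \<open>y \<in> hurwitz\<close> u]] \<open>\<forall>p\<in>P. int p ^ K dvd a\<close> pP
      by blast
    then show ?thesis unfolding I_def using hurwitz_smult[OF \<open>y \<in> hurwitz\<close>] by blast
  qed
  define N where "N = qsmult (of_int (int M ^ K)) qone"
  have NI: "N \<in> I" unfolding N_def
  proof (rule I_smult[OF hurwitz_one], intro ballI)
    fix p assume "p \<in> P"
    then show "int p ^ K dvd int M ^ K" using RpK[of p] PS by auto
  qed
  have N0: "N \<noteq> qzero" unfolding N_def qone_def qzero_def using M0 by simp
  obtain g where g: "g \<in> I" "g \<noteq> qzero" "\<forall>h\<in>I. h \<noteq> qzero \<longrightarrow> qnorm g \<le> qnorm h"
    using exists_min[OF NI N0 I_sub] by blast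
  have gh: "g \<in> hurwitz" using g(1) I_sub by auto
  have princ: "\<exists>r\<in>hurwitz. x = qmul g r" if "x \<in> I" for x
    by (rule principal[OF I_sub I_qsub I_mul g that])
  obtain o' where o': "o' \<in> hurwitz" "N = qmul g o'" using princ[OF NI] by blast
  have img: "m2_vec (int p) (\<psi> p g) ` zp2 (int p) = L p" if pP: "p \<in> P" for p
  proof
    have gI: "\<forall>u\<in>zp2 (int p). m2_vec (int p) (\<psi> p g) u \<in> L p" using g(1) pP unfolding I_def by blast
    show "m2_vec (int p) (\<psi> p g) ` zp2 (int p) \<subseteq> L p"
    proof (rule image_subsetI)
      fix u assume "u \<in> zp2 (int p)"
      then show "m2_vec (int p) (\<psi> p g) u \<in> L p" by (rule bspec[OF gI])
    qed
    have pS: "p \<in> S" using pP PS by auto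
    have nK: "\<forall>w\<in>zp2 (int p). vsc (int p) (zpi (int p) (int p ^ K)) w \<in> L p"
    proof (intro ballI)
      fix w assume w: "w \<in> zp2 (int p)"
      show "vsc (int p) (zpi (int p) (int p ^ K)) w \<in> L p" by (rule LK[OF pP dvd_refl w])
    qed
    have N': "qsmult (of_int (int p ^ K * Rp p)) qone = qmul g o'"
      using o'(2) RpK[OF pS] unfolding N_def by simp
    have pK: "\<forall>w\<in>zp2 (int p). vsc (int p) (zpi (int p) (int p ^ K)) w \<in> m2_vec (int p) (\<psi> p g) ` zp2 (int p)"
    proof (intro ballI)
      fix w assume w: "w \<in> zp2 (int p)"
      show "vsc (int p) (zpi (int p) (int p ^ K)) w \<in> m2_vec (int p) (\<psi> p g) ` zp2 (int p)"
        by (rule img_pK[OF p1[OF pP] iso[OF pP] gh o'(1) N' Rcop[OF pS] w])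
    qed
    have cl: "\<exists>ob\<in>hurwitz. qsmult (of_int (Rp p)) y = qmul g ob"
      if y: "y \<in> hurwitz" "\<forall>u\<in>zp2 (int p). m2_vec (int p) (\<psi> p y) u \<in> L p" for y
    proof -
      have "m2_vec (int q) (\<psi> q (qsmult (of_int (Rp p)) y)) u \<in> L q"
        if qP: "q \<in> P" and u: "u \<in> zp2 (int q)" for q u
      proof (cases "q = p")
        case True
        then have uu: "u \<in> zp2 (int p)" using u by simp
        have "m2_vec (int p) (\<psi> p y) u \<in> L p" by (rule bspec[OF y(2) uu])
        then have "vsc (int p) (zpi (int p) (Rp p)) (m2_vec (int p) (\<psi> p y) u) \<in> L p"
          by (rule lat_sc[OF p1[OF pP] lat[OF pP] zp_of_int_mem[OF p1[OF pP]]])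
        then show ?thesis using True psi_smult[OF p1[OF pP] iso[OF pP] y(1) uu] by simp
      next
        case False
        have "int q ^ K dvd Rp p" using Rdvd[OF pS _ False] qP PS by auto
        then show ?thesis
          unfolding psi_smult[OF p1[OF qP] iso[OF qP] y(1) u]
          by (rule LK[OF qP _ psi_vec_mem[OF p1[OF qP] iso[OF qP] y(1) u]])
      qed
      then have "qsmult (of_int (Rp p)) y \<in> I" unfolding I_def using hurwitz_smult[OF y(1)] by blast
      then show ?thesis by (rule princ)
    qed
    show "L p \<subseteq> m2_vec (int p) (\<psi> p g) ` zp2 (int p)"
    proof (rule subsetI)
      fix v assume v: "v \<in> L p"
      note D = density[OF p1[OF pP] iso[OF pP] lat[OF pP] nK Rcop[OF pS] gh pK]
      show "v \<in> m2_vec (int p) (\<psi> p g) ` zp2 (int p)"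
        apply (rule D[OF _ v])
        apply (rule cl)
         apply assumption+
        done
    qed
  qed
  have gG: "g \<in> GammaS S"
  proof -
    have OS1: "qsmult (1 / of_nat (mS S ^ k)) x \<in> OS S" if "x \<in> hurwitz" for x k
      unfolding OS_def using that by blast
    have gO: "g \<in> OS S" using OS1[OF gh, of 0] by simp
    define h where "h = qsmult (1 / of_nat (M ^ K)) o'"
    have hO: "h \<in> OS S" unfolding h_def M_def by (rule OS1[OF o'(1)])
    have MK: "(of_nat (M ^ K) :: rat) \<noteq> 0" using M0 by simp
    have "qmul g o' = qsmult (of_nat (M ^ K)) qone" using o'(2) unfolding N_def by simp
    moreover then have "qmul o' g = qsmult (of_nat (M ^ K)) qone" using qmul_inv_comm g(2) by blast
    ultimately have "qmul g h = qone" "qmul h g = qone"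
      unfolding h_def using MK M0 by (simp_all add: qmul_smult_right qmul_smult_left qsmult_smult)
    then show ?thesis unfolding GammaS_def using gO hO by blast
  qed
  have maps: "maps_vertex S p (\<psi> p) (qsmult c g) (zp_std (int p)) (L p)"
    if c: "c \<in> ZS_units S" and pP: "p \<in> P" for c p
  proof -
    have pS: "p \<in> S" using pP PS by auto
    obtain a j where a: "c = of_int a / of_nat (mS S ^ j)" using c unfolding ZS_units_def ZS_def by blast
    have c0: "c \<noteq> 0" using c unfolding ZS_units_def by blast
    have a0: "a \<noteq> 0" using c0 a by auto
    have Mj: "(of_nat (mS S ^ j) :: rat) \<noteq> 0" using M0 unfolding M_def by simp
    have e: "qsmult (of_nat (mS S ^ j)) (qsmult c g) = qsmult (of_int a) g"
      unfolding qsmult_smult a using Mj by simp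
    have ah: "qsmult (of_int a) g \<in> hurwitz" by (rule hurwitz_smult[OF gh])
    have im: "m2_vec (int p) (\<psi> p (qsmult (of_int a) g)) ` zp_std (int p) = vsc (int p) (zpi (int p) a) ` L p"
    proof -
      have "m2_vec (int p) (\<psi> p (qsmult (of_int a) g)) ` zp_std (int p)
          = vsc (int p) (zpi (int p) a) ` (m2_vec (int p) (\<psi> p g) ` zp2 (int p))"
        unfolding zp_std_def image_image
        using psi_smult[OF p1[OF pP] iso[OF pP] gh] by (intro image_cong) auto
      then show ?thesis using img[OF pP] by simp
    qed
    have nu: "\<not> is_unit (int p)" using p1[OF pP] by simp
    obtain b where b: "a = int p ^ multiplicity (int p) a * b" "\<not> int p dvd b"
      using multiplicity_decompose'[OF a0 nu] by blast
    define e' where "e' = multiplicity (int p) a"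
    have bc: "coprime b (int p)"
      using prime_imp_coprime[of "int p" b] b(2) prS[OF pS] by (simp add: coprime_commute)
    have "vsc (int p) (zpi (int p) a) ` L p = vsc (int p) (zpi (int p) (int p ^ e')) ` (vsc (int p) (zpi (int p) b) ` L p)"
      unfolding image_image e'_def by (subst b(1)) (simp add: vsc_int_mult)
    also have "\<dots> = vsc (int p) (zpi (int p) (int p ^ e')) ` L p"
      using lat_unit[OF p1[OF pP] lat[OF pP] bc] by simp
    finally have im2: "vsc (int p) (zpi (int p) a) ` L p = zp_scale (int p) e' (L p)"
      unfolding zp_scale_vsc .
    have sub: "vsc (int p) (zpi (int p) a) ` L p \<subseteq> zp2 (int p)"
      using vsc_mem[OF p1[OF pP] zp_of_int_mem[OF p1[OF pP]]] lat_sub[OF p1[OF pP] lat[OF pP]] by blast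
    have "zp_scale (int p) 0 (vsc (int p) (zpi (int p) a) ` L p) = vsc (int p) (zpi (int p) a) ` L p"
      unfolding zp_scale_vsc power_0
    proof -
      have "vsc (int p) (zpi (int p) 1) ` (vsc (int p) (zpi (int p) a) ` L p) = (\<lambda>u. u) ` (vsc (int p) (zpi (int p) a) ` L p)"
      proof (rule image_cong[OF refl])
        fix u assume "u \<in> vsc (int p) (zpi (int p) a) ` L p"
        then have "u \<in> zp2 (int p)" using sub by (rule subsetD[rotated])
        then show "vsc (int p) (zpi (int p) 1) u = u" by (rule vsc_one)
      qed
      then show "vsc (int p) (zpi (int p) 1) ` (vsc (int p) (zpi (int p) a) ` L p) = vsc (int p) (zpi (int p) a) ` L p"
        by simp
    qed
    then have "homothetic (int p) (m2_vec (int p) (\<psi> p (qsmult (of_int a) g)) ` zp_std (int p)) (L p)"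
      unfolding homothetic_def im using im2 by metis
    then have "qsmult (of_nat (mS S ^ j)) (qsmult c g) \<in> hurwitz \<and>
      homothetic (int p) (m2_vec (int p) (\<psi> p (qsmult (of_nat (mS S ^ j)) (qsmult c g))) ` zp_std (int p)) (L p)"
      unfolding e using ah by blast
    then show ?thesis unfolding maps_vertex_def by blast
  qed
  have one: "1 \<in> ZS_units S"
  proof -
    have "(1::rat) \<in> ZS S" unfolding ZS_def by (rule CollectI, rule exI[of _ 1], rule exI[of _ 0]) simp
    then show ?thesis unfolding ZS_units_def by simp
  qed
  have part1: "\<forall>p\<in>S. odd p \<longrightarrow> maps_vertex S p (\<psi> p) g (zp_std (int p)) (L p)"
    using maps[OF one] unfolding P_def by simp
  define C where "C = (\<lambda>c. qsmult c g) ` ZS_units S"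
  have CG: "C \<in> GammaBarS S" unfolding C_def GammaBarS_def using gG by blast
  have part2: "\<forall>h\<in>C. \<forall>p\<in>S. odd p \<longrightarrow> maps_vertex S p (\<psi> p) h (zp_std (int p)) (L p)"
    unfolding C_def P_def using maps unfolding P_def by blast
  show ?thesis using gG part1 CG part2 by blast
qed


end
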